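(* Let $d\ge 1$ and for $n\in\mathbb{N}_0$ put $r_n=\binom{n+d-1}{n}$. Let $w$ be a nonnegative weight function with finite moments on a domain $\Omega\subset\mathbb{R}^d$, and let $(\mathbb{P}_n)_{n\ge0}$ be a family of vectors of polynomials $\mathbb{P}_n=(P_{n,1},\dots,P_{n,r_n})^T$ in $x=(x_1,\dots,x_d)$ forming a system of orthogonal polynomials with respect to $w$, i.e. the entries of $\mathbb{P}_n$ are polynomials of total degree $n$ which, together with all polynomials of degree $<n$, span the polynomials of degree $\le n$, and $$\int_\Omega \mathbb{P}_i(x)\mathbb{P}_j^T(x)w(x)\,dx=\mathbf 0_{r_i\times r_j}\ (i\neq j),\qquad \int_\Omega \mathbb{P}_j(x)\mathbb{P}_j^T(x)w(x)\,dx=\Pi_j^{-1},$$ with $\Pi_j$ an invertible $r_j\times r_j$ matrix. Suppose the three-term recurrence relations $$x_i\mathbb{P}_n(x)=A_{n,i}\mathbb{P}_{n+1}(x)+B_{n,i}\mathbb{P}_n(x)+C_{n,i}\mathbb{P}_{n-1}(x),\quad n\ge0,\ i=1,\dots,d,\ \mathbb{P}_{-1}=0,$$ hold, with $A_{n,i}$ of size $r_n\times r_{n+1}$, $B_{n,i}$ of size $r_n\times r_n$, $C_{n,i}$ of size $r_n\times r_{n-1}$. For $n\ge1$ let $C_n^T$ denote the $dr_{n-1}\times r_n$ matrix obtained by stacking $C_{n,1}^T,\dots,C_{n,d}^T$ vertically (i.e. $C_n^T=(C_{n,1}\ \cdots\ C_{n,d})^T$), and let $G_n=(G_{n,1}\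 \cdots\ G_{n,d})$, with each $G_{n,i}$ of size $r_n\times r_{n-1}$, be any generalized (left) inverse of $C_n^T$, i.e. $G_nC_n^T=\sum_{i=1}^d G_{n,i}C_{n,i}^T=I_{r_n}$. Then for every $n\ge1$, $$\Pi_n=\Pi_0\sum_{i_1,\dots,i_n\in\{1,\dots,d\}}G_{n,i_1}G_{n-1,i_2}\cdots G_{1,i_n}A_{0,i_n}A_{1,i_{n-1}}\cdots A_{n-1,i_1},$$ and this expression does not depend on the choice of the generalized inverses $G_1,\dots,G_n$.
   Context: Here $\Pi_0$ is a scalar since $r_0=1$. The joint matrix $C_n^T$ has full rank $r_n$, so left inverses exist. In the paper's setting the relations $\Pi_{n-1}A_{n-1,i}=C_{n,i}^T\Pi_n$ hold for all $n\ge1$ and $i=1,\dots,d$ (they follow from the orthogonality and the recurrence relations). *)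

theory Defs
  imports "HOL-Analysis.Analysis" "Jordan_Normal_Form.Matrix"
begin

definition monom_fun :: "('d::finite \<Rightarrow> nat) \<Rightarrow> real^'d \<Rightarrow> real" where
  "monom_fun \<alpha> x = (\<Prod>i\<in>UNIV. (vec_nth x i) ^ \<alpha> i)"

definition tdeg :: "('d::finite \<Rightarrow> nat) \<Rightarrow> nat" where
  "tdeg \<alpha> = (\<Sum>i\<in>UNIV. \<alpha> i)"

definition poly_deg_less :: "nat \<Rightarrow> (real^'d::finite \<Rightarrow> real) \<Rightarrow> bool" where
  "poly_deg_less n f \<longleftrightarrow>
     (\<exists>c::('d \<Rightarrow> nat) \<Rightarrow> real. f = (\<lambda>x. \<Sum>\<alpha>\<in>{\<alpha>. tdeg \<alpha> < n}. c \<alpha> * monom_fun \<alpha> x))"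

definition poly_deg_le :: "nat \<Rightarrow> (real^'d::finite \<Rightarrow> real) \<Rightarrow> bool" where
  "poly_deg_le n f \<longleftrightarrow> poly_deg_less (Suc n) f"

definition poly_deg_eq :: "nat \<Rightarrow> (real^'d::finite \<Rightarrow> real) \<Rightarrow> bool" where
  "poly_deg_eq n f \<longleftrightarrow> poly_deg_le n f \<and> \<not> poly_deg_less n f"

definition rdim :: "'d::finite itself \<Rightarrow> nat \<Rightarrow> nat" where
  "rdim _ n = (n + CARD('d) - 1) choose n"

text \<open>The vector P_n(x) = (P_{n,1}(x),...,P_{n,r_n}(x))^T (0-based entries).\<close>
definition Pvec :: "(nat \<Rightarrow> nat \<Rightarrow> real^'d::finite \<Rightarrow> real) \<Rightarrow> nat \<Rightarrow> real^'d \<Rightarrow> real Matrix.vec" where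
  "Pvec P n x = Matrix.vec (rdim TYPE('d) n) (\<lambda>k. P n k x)"

definition gram :: "(nat \<Rightarrow> nat \<Rightarrow> real^'d::finite \<Rightarrow> real) \<Rightarrow> (real^'d \<Rightarrow> real) \<Rightarrow> (real^'d) set
                     \<Rightarrow> nat \<Rightarrow> nat \<Rightarrow> real mat" where
  "gram P w \<Omega> i j = mat (rdim TYPE('d) i) (rdim TYPE('d) j)
      (\<lambda>(k,l). LINT x:\<Omega>|lborel. P i k x * P j l x * w x)"

definition msum :: "nat \<Rightarrow> nat \<Rightarrow> ('i \<Rightarrow> real mat) \<Rightarrow> 'i set \<Rightarrow> real mat" where
  "msum dr dc f S = mat dr dc (\<lambda>(a,b). \<Sum>i\<in>S. f i $$ (a,b))"

fun mprod :: "nat \<Rightarrow> (nat \<Rightarrow> real mat) \<Rightarrow> nat \<Rightarrow> real mat" where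
  "mprod dm f 0 = 1\<^sub>m dm"
| "mprod dm f (Suc k) = mprod dm f k * f k"

text \<open>The expression
  Pi_0 * sum_{i_1..i_n} G_{n,i_1} G_{n-1,i_2} ... G_{1,i_n} A_{0,i_n} A_{1,i_{n-1}} ... A_{n-1,i_1},
  where a choice (i_1,...,i_n) is a function s on {1..n}.\<close>
definition pi_formula :: "'d::finite itself \<Rightarrow> (nat \<Rightarrow> real mat) \<Rightarrow> (nat \<Rightarrow> 'd \<Rightarrow> real mat)
                          \<Rightarrow> (nat \<Rightarrow> 'd \<Rightarrow> real mat) \<Rightarrow> nat \<Rightarrow> real mat" where
  "pi_formula T Pim A G n =
     (Pim 0 $$ (0,0)) \<cdot>\<^sub>m
       msum (rdim TYPE('d) n) (rdim TYPE('d) n)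
         (\<lambda>s. mprod (rdim TYPE('d) n) (\<lambda>j. G (n - j) (s (Suc j))) n
               * mprod (rdim TYPE('d) 0) (\<lambda>k. A k (s (n - k))) n)
         ({1..n} \<rightarrow>\<^sub>E (UNIV::'d set))"

end

theory Submission
  imports Defs "Jordan_Normal_Form.Determinant"
begin

lemma mprod_carrier:
  assumes "\<forall>j<k. f j \<in> carrier_mat (d j) (d (Suc j))" "d 0 = dm"
  shows "mprod dm f k \<in> carrier_mat dm (d k)"
  using assms by (induction k) auto

lemma mprod_cong: "\<forall>j<k. f j = g j \<Longrightarrow> mprod dm f k = mprod dm g k"
  by (induction k) auto

lemma mprod_Suc_left:
  assumes "\<forall>j\<le>k. f j \<in> carrier_mat (d j) (d (Suc j))" "d 0 = dm"
  shows "mprod dm f (Suc k) = f 0 * mprod (d 1) (\<lambda>j. f (Suc j)) k"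
  using assms
proof (induction k)
  case 0
  then show ?case by auto
next
  case (Suc k)
  have IH: "mprod dm f (Suc k) = f 0 * mprod (d 1) (\<lambda>j. f (Suc j)) k"
    using Suc by auto
  have c1: "mprod (d 1) (\<lambda>j. f (Suc j)) k \<in> carrier_mat (d 1) (d (Suc k))"
    using mprod_carrier[of k "\<lambda>j. f (Suc j)" "\<lambda>j. d (Suc j)" "d 1"] Suc.prems by auto
  have "mprod dm f (Suc (Suc k)) = (f 0 * mprod (d 1) (\<lambda>j. f (Suc j)) k) * f (Suc k)"
    using IH by simp
  also have "\<dots> = f 0 * (mprod (d 1) (\<lambda>j. f (Suc j)) k * f (Suc k))"
    by (rule assoc_mult_mat[OF _ c1]) (use Suc.prems in auto)
  finally show ?case by simp
qed

lemma msum_carrier[simp]: "msum a b f S \<in> carrier_mat a b"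
  by (simp add: msum_def)

lemma msum_index: "x < a \<Longrightarrow> y < b \<Longrightarrow> msum a b f S $$ (x,y) = (\<Sum>i\<in>S. f i $$ (x,y))"
  by (simp add: msum_def)

lemma msum_cong: "(\<And>i. i \<in> S \<Longrightarrow> f i = g i) \<Longrightarrow> msum a b f S = msum a b g S"
  by (simp add: msum_def)

lemma msum_mult_right:
  assumes "\<forall>i\<in>S. f i \<in> carrier_mat a b" "B \<in> carrier_mat b c"
  shows "msum a b f S * B = msum a c (\<lambda>i. f i * B) S"
proof (rule eq_matI)
  fix x y assume xy: "x < dim_row (msum a c (\<lambda>i. f i * B) S)" "y < dim_col (msum a c (\<lambda>i. f i * B) S)"
  hence x: "x < a" and y: "y < c" by (auto simp: msum_def)
  have "(msum a b f S * B) $$ (x,y) = (\<Sum>k<b. (\<Sum>i\<in>S. f i $$ (x,k)) * B $$ (k,y))"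
    using x y assms(2) by (simp add: index_mult_mat scalar_prod_def msum_def lessThan_atLeast0)
  also have "\<dots> = (\<Sum>i\<in>S. \<Sum>k<b. f i $$ (x,k) * B $$ (k,y))"
    by (simp add: sum_distrib_right) (rule sum.swap)
  also have "\<dots> = msum a c (\<lambda>i. f i * B) S $$ (x,y)"
    using x y assms by (auto simp: msum_index index_mult_mat scalar_prod_def lessThan_atLeast0 intro!: sum.cong)
  finally show "(msum a b f S * B) $$ (x,y) = msum a c (\<lambda>i. f i * B) S $$ (x,y)" .
qed (use assms in \<open>auto simp: msum_def\<close>)

lemma msum_mult_left:
  assumes "\<forall>i\<in>S. f i \<in> carrier_mat b c" "A \<in> carrier_mat a b"
  shows "A * msum b c f S = msum a c (\<lambda>i. A * f i) S"
proof (rule eq_matI)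
  fix x y assume xy: "x < dim_row (msum a c (\<lambda>i. A * f i) S)" "y < dim_col (msum a c (\<lambda>i. A * f i) S)"
  hence x: "x < a" and y: "y < c" by (auto simp: msum_def)
  have "(A * msum b c f S) $$ (x,y) = (\<Sum>k<b. A $$ (x,k) * (\<Sum>i\<in>S. f i $$ (k,y)))"
    using x y assms(2) by (simp add: index_mult_mat scalar_prod_def msum_def lessThan_atLeast0)
  also have "\<dots> = (\<Sum>i\<in>S. \<Sum>k<b. A $$ (x,k) * f i $$ (k,y))"
    by (simp add: sum_distrib_left) (rule sum.swap)
  also have "\<dots> = msum a c (\<lambda>i. A * f i) S $$ (x,y)"
    using x y assms by (auto simp: msum_index index_mult_mat scalar_prod_def lessThan_atLeast0 intro!: sum.cong)
  finally show "(A * msum b c f S) $$ (x,y) = msum a c (\<lambda>i. A * f i) S $$ (x,y)" .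
qed (use assms in \<open>auto simp: msum_def\<close>)

lemma msum_smult: "\<forall>i\<in>S. f i \<in> carrier_mat a b \<Longrightarrow> c \<cdot>\<^sub>m msum a b f S = msum a b (\<lambda>i. c \<cdot>\<^sub>m f i) S"
  by (rule eq_matI) (auto simp: msum_def sum_distrib_left intro!: sum.cong)

lemma msum_singleton: "f x \<in> carrier_mat a b \<Longrightarrow> msum a b f {x} = f x"
  by (rule eq_matI) (auto simp: msum_def)

lemma msum_PiE_insert:
  assumes "x \<notin> S"
  shows "msum a b f (Pi\<^sub>E (insert x S) T) = msum a b (\<lambda>g. msum a b (\<lambda>y. f (g(x:=y))) (T x)) (Pi\<^sub>E S T)"
proof (rule eq_matI)
  fix p q assume "p < dim_row (msum a b (\<lambda>g. msum a b (\<lambda>y. f (g(x:=y))) (T x)) (Pi\<^sub>E S T))"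
    "q < dim_col (msum a b (\<lambda>g. msum a b (\<lambda>y. f (g(x:=y))) (T x)) (Pi\<^sub>E S T))"
  hence pq: "p < a" "q < b" by (auto simp: msum_def)
  have "(\<Sum>s\<in>Pi\<^sub>E (insert x S) T. f s $$ (p,q)) = (\<Sum>(y,g)\<in>T x \<times> Pi\<^sub>E S T. f (g(x:=y)) $$ (p,q))"
    unfolding PiE_insert_eq by (subst sum.reindex[OF inj_combinator[OF assms]]) (simp add: case_prod_unfold o_def)
  also have "\<dots> = (\<Sum>y\<in>T x. \<Sum>g\<in>Pi\<^sub>E S T. f (g(x:=y)) $$ (p,q))"
    by (rule sum.cartesian_product[symmetric])
  also have "\<dots> = (\<Sum>g\<in>Pi\<^sub>E S T. \<Sum>y\<in>T x. f (g(x:=y)) $$ (p,q))"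
    by (rule sum.swap)
  finally show "msum a b f (Pi\<^sub>E (insert x S) T) $$ (p,q) = msum a b (\<lambda>g. msum a b (\<lambda>y. f (g(x:=y))) (T x)) (Pi\<^sub>E S T) $$ (p,q)"
    using pq by (simp add: msum_index)
qed (auto simp: msum_def)

lemma assoc5:
  assumes "X \<in> carrier_mat a b" "G \<in> carrier_mat b d" "P \<in> carrier_mat d d"
    "Ay \<in> carrier_mat d b" "Y \<in> carrier_mat b e"
  shows "X * (G * P * Ay) * Y = (X * G) * P * (Ay * Y)"
proof -
  have c1: "G * P \<in> carrier_mat b d" "G * P * Ay \<in> carrier_mat b b" "Ay * Y \<in> carrier_mat d e"
    "P * (Ay * Y) \<in> carrier_mat d e" "X * G \<in> carrier_mat a d"
    using assms by auto
  have "X * (G * P * Ay) * Y = X * (G * P * Ay * Y)"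
    by (rule assoc_mult_mat[OF assms(1) c1(2) assms(5)])
  also have "G * P * Ay * Y = G * P * (Ay * Y)"
    by (rule assoc_mult_mat[OF c1(1) assms(4) assms(5)])
  also have "G * P * (Ay * Y) = G * (P * (Ay * Y))"
    by (rule assoc_mult_mat[OF assms(2) assms(3) c1(3)])
  also have "X * (G * (P * (Ay * Y))) = (X * G) * (P * (Ay * Y))"
    by (rule assoc_mult_mat[OF assms(1) assms(2) c1(4), symmetric])
  also have "(X * G) * (P * (Ay * Y)) = (X * G) * P * (Ay * Y)"
    by (rule assoc_mult_mat[OF c1(5) assms(3) c1(3), symmetric])
  finally show ?thesis .
qed

lemma rdim0[simp]: "rdim TYPE('d::finite) 0 = 1"
  by (simp add: rdim_def)

lemma pi_formula_from_rec:
  fixes Pim :: "nat \<Rightarrow> real mat" and A G :: "nat \<Rightarrow> 'd::finite \<Rightarrow> real mat"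
  defines "r \<equiv> rdim TYPE('d)"
  assumes Pc: "\<forall>j. Pim j \<in> carrier_mat (r j) (r j)"
    and Ac: "\<forall>j i. A j i \<in> carrier_mat (r j) (r (Suc j))"
    and Gc: "\<forall>m\<in>{1..n}. \<forall>i. G m i \<in> carrier_mat (r m) (r (m - 1))"
    and rec: "\<forall>m\<in>{1..n}. Pim m = msum (r m) (r m) (\<lambda>i. G m i * Pim (m-1) * A (m-1) i) UNIV"
  shows "Pim n = pi_formula TYPE('d) Pim A G n"
proof -
  define Gp where "Gp k s = mprod (r n) (\<lambda>j. G (n-j) (s (Suc j))) k" for k and s :: "nat \<Rightarrow> 'd"
  define Ap where "Ap k s = mprod (r (n-k)) (\<lambda>j. A (n-k+j) (s (k-j))) k" for k and s :: "nat \<Rightarrow> 'd"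
  have GpC: "Gp k s \<in> carrier_mat (r n) (r (n-k))" if "k \<le> n" for k s
    unfolding Gp_def
  proof (rule mprod_carrier[where d="\<lambda>j. r (n-j)"])
    show "\<forall>j<k. G (n-j) (s (Suc j)) \<in> carrier_mat (r (n-j)) (r (n - Suc j))"
    proof (intro allI impI)
      fix j assume "j<k"
      hence "n-j \<in> {1..n}" "n - j - 1 = n - Suc j" using that by auto
      thus "G (n-j) (s (Suc j)) \<in> carrier_mat (r (n-j)) (r (n - Suc j))" using Gc by metis
    qed
  qed simp
  have ApC: "Ap k s \<in> carrier_mat (r (n-k)) (r n)" if "k \<le> n" for k s
  proof -
    have "Ap k s \<in> carrier_mat (r (n-k)) (r (n-k+k))"
      unfolding Ap_def by (rule mprod_carrier[where d="\<lambda>j. r (n-k+j)"]) (use Ac in auto)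
    thus ?thesis using that by simp
  qed
  have main: "Pim n = msum (r n) (r n) (\<lambda>s. Gp k s * Pim (n-k) * Ap k s) ({1..k} \<rightarrow>\<^sub>E UNIV)"
    if "k \<le> n" for k
    using that
  proof (induction k)
    case 0
    have "Pim n = Gp 0 (\<lambda>x. undefined) * Pim (n-0) * Ap 0 (\<lambda>x. undefined)"
      using Pc[rule_format, of n] by (simp add: Gp_def Ap_def)
    moreover have "msum (r n) (r n) (\<lambda>s. Gp 0 s * Pim (n-0) * Ap 0 s) {\<lambda>x. undefined}
       = Gp 0 (\<lambda>x. undefined) * Pim (n-0) * Ap 0 (\<lambda>x. undefined)"
    proof (rule msum_singleton)
      have "Gp 0 (\<lambda>x. undefined) \<in> carrier_mat (r n) (r n)" "Ap 0 (\<lambda>x. undefined) \<in> carrier_mat (r n) (r n)"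
        "Pim (n-0) \<in> carrier_mat (r n) (r n)"
        using Pc GpC[of 0 "\<lambda>x. undefined"] ApC[of 0 "\<lambda>x. undefined"] by auto
      thus "Gp 0 (\<lambda>x. undefined) * Pim (n-0) * Ap 0 (\<lambda>x. undefined) \<in> carrier_mat (r n) (r n)"
        by (metis mult_carrier_mat)
    qed
    ultimately show ?case by simp
  next
    case (Suc k)
    hence kn: "k < n" by simp
    have recm: "Pim (n-k) = msum (r (n-k)) (r (n-k)) (\<lambda>i. G (n-k) i * Pim (n - Suc k) * A (n - Suc k) i) UNIV"
    proof -
      have m1: "n-k \<in> {1..n}" using kn by auto
      show ?thesis using rec[rule_format, OF m1] by simp
    qed
    have termC: "G (n-k) i * Pim (n - Suc k) * A (n - Suc k) i \<in> carrier_mat (r (n-k)) (r (n-k))" for i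
    proof -
      have "G (n-k) i \<in> carrier_mat (r (n-k)) (r (n - Suc k))" proof -
        have m1: "n-k \<in> {1..n}" using kn by auto
        have "n - k - 1 = n - Suc k" by simp
        thus ?thesis using Gc m1 by metis
      qed
      moreover have "A (n - Suc k) i \<in> carrier_mat (r (n - Suc k)) (r (n-k))" using Ac[rule_format, of "n - Suc k" i] kn by (simp add: Suc_diff_Suc)
      ultimately show ?thesis using Pc by auto
    qed
    have "Pim n = msum (r n) (r n) (\<lambda>s. Gp k s * Pim (n-k) * Ap k s) ({1..k} \<rightarrow>\<^sub>E UNIV)"
      using Suc by simp
    also have "\<dots> = msum (r n) (r n) (\<lambda>s. msum (r n) (r n) (\<lambda>y. Gp k s * (G (n-k) y * Pim (n - Suc k) * A (n - Suc k) y) * Ap k s) UNIV) ({1..k} \<rightarrow>\<^sub>E UNIV)"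
    proof (rule msum_cong)
      fix s :: "nat \<Rightarrow> 'd"
      have "Gp k s * Pim (n-k) * Ap k s = msum (r n) (r (n-k)) (\<lambda>y. Gp k s * (G (n-k) y * Pim (n - Suc k) * A (n - Suc k) y)) UNIV * Ap k s"
        by (subst recm, subst msum_mult_left[where b="r (n-k)"]) (use termC GpC kn in auto)
      also have "\<dots> = msum (r n) (r n) (\<lambda>y. Gp k s * (G (n-k) y * Pim (n - Suc k) * A (n - Suc k) y) * Ap k s) UNIV"
      proof (rule msum_mult_right)
        show "\<forall>i\<in>UNIV. Gp k s * (G (n-k) i * Pim (n - Suc k) * A (n - Suc k) i) \<in> carrier_mat (r n) (r (n-k))"
          using mult_carrier_mat[OF GpC[of k s] termC] kn by auto
        show "Ap k s \<in> carrier_mat (r (n-k)) (r n)" using ApC kn by auto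
      qed
      finally show "Gp k s * Pim (n-k) * Ap k s = \<dots>" .
    qed
    also have "\<dots> = msum (r n) (r n) (\<lambda>g. msum (r n) (r n) (\<lambda>y. Gp (Suc k) (g(Suc k := y)) * Pim (n - Suc k) * Ap (Suc k) (g(Suc k := y))) UNIV) ({1..k} \<rightarrow>\<^sub>E UNIV)"
    proof (intro msum_cong)
      fix g :: "nat \<Rightarrow> 'd" and y
      have e1: "Gp (Suc k) (g(Suc k := y)) = Gp k g * G (n-k) y"
      proof -
        have "mprod (r n) (\<lambda>j. G (n - j) ((g(Suc k := y)) (Suc j))) k = mprod (r n) (\<lambda>j. G (n - j) (g (Suc j))) k"
          by (rule mprod_cong) auto
        thus ?thesis by (simp add: Gp_def)
      qed
      have e2: "Ap (Suc k) (g(Suc k := y)) = A (n - Suc k) y * Ap k g"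
      proof -
        have "Ap (Suc k) (g(Suc k := y)) = A (n - Suc k) y * mprod (r (n - Suc k + 1)) (\<lambda>j. A (n - Suc k + Suc j) ((g(Suc k := y)) (Suc k - Suc j))) k"
          unfolding Ap_def by (subst mprod_Suc_left[where d="\<lambda>j. r (n - Suc k + j)"]) (use Ac in auto)
        also have "\<dots> = A (n - Suc k) y * Ap k g"
          unfolding Ap_def using kn by (auto intro!: arg_cong2[where f="(*)"] mprod_cong simp: Suc_diff_Suc)
        finally show ?thesis .
      qed
      have gc: "G (n-k) y \<in> carrier_mat (r (n-k)) (r (n - Suc k))" proof -
        have m1: "n-k \<in> {1..n}" using kn by auto
        have "n - k - 1 = n - Suc k" by simp
        thus ?thesis using Gc m1 by metis
      qed
      have ac: "A (n - Suc k) y \<in> carrier_mat (r (n - Suc k)) (r (n-k))" using Ac[rule_format, of "n - Suc k" y] kn by (simp add: Suc_diff_Suc)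
      show "Gp k g * (G (n-k) y * Pim (n - Suc k) * A (n - Suc k) y) * Ap k g = Gp (Suc k) (g(Suc k := y)) * Pim (n - Suc k) * Ap (Suc k) (g(Suc k := y))"
        unfolding e1 e2 by (rule assoc5[OF GpC gc _ ac ApC]) (use kn Pc in auto)
    qed
    also have "\<dots> = msum (r n) (r n) (\<lambda>s. Gp (Suc k) s * Pim (n - Suc k) * Ap (Suc k) s) ({1..Suc k} \<rightarrow>\<^sub>E UNIV)"
    proof -
      have "{1..Suc k} = insert (Suc k) {1..k}" by auto
      thus ?thesis by (simp add: msum_PiE_insert)
    qed
    finally show ?case .
  qed
  have "Pim n = msum (r n) (r n) (\<lambda>s. Gp n s * Pim 0 * Ap n s) ({1..n} \<rightarrow>\<^sub>E UNIV)"
    using main[of n] by simp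
  also have "\<dots> = msum (r n) (r n) (\<lambda>s. Pim 0 $$ (0,0) \<cdot>\<^sub>m (Gp n s * Ap n s)) ({1..n} \<rightarrow>\<^sub>E UNIV)"
  proof (rule msum_cong)
    fix s
    have P0: "Pim 0 = Pim 0 $$ (0,0) \<cdot>\<^sub>m 1\<^sub>m 1"
      using Pc[rule_format, of 0] by (intro eq_matI) (auto simp: r_def)
    have "Gp n s * Pim 0 = Pim 0 $$ (0,0) \<cdot>\<^sub>m Gp n s"
      using GpC[of n s] by (subst P0) (auto simp: r_def)
    thus "Gp n s * Pim 0 * Ap n s = Pim 0 $$ (0,0) \<cdot>\<^sub>m (Gp n s * Ap n s)"
      using GpC[of n s] ApC[of n s] by (simp add: mult_smult_assoc_mat)
  qed
  also have "\<dots> = Pim 0 $$ (0,0) \<cdot>\<^sub>m msum (r n) (r n) (\<lambda>s. Gp n s * Ap n s) ({1..n} \<rightarrow>\<^sub>E UNIV)"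
  proof (rule msum_smult[symmetric])
    have "Gp n s * Ap n s \<in> carrier_mat (r n) (r n)" for s
      using mult_carrier_mat[OF GpC[of n s] ApC[of n s]] by simp
    thus "\<forall>s\<in>{1..n} \<rightarrow>\<^sub>E UNIV. Gp n s * Ap n s \<in> carrier_mat (r n) (r n)" by auto
  qed
  also have "\<dots> = pi_formula TYPE('d) Pim A G n"
    unfolding pi_formula_def r_def[symmetric] Gp_def Ap_def by simp
  finally show ?thesis .
qed


lemma monom_add: "monom_fun (\<lambda>i. a i + b i) x = monom_fun a x * monom_fun b x"
  unfolding monom_fun_def by (simp add: power_add prod.distrib)

lemma set_integrable_sum':
  fixes f :: "'i \<Rightarrow> 'a \<Rightarrow> real"
  shows "(\<forall>i\<in>I. set_integrable M A (f i)) \<Longrightarrow> set_integrable M A (\<lambda>x. \<Sum>i\<in>I. f i x)"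
  unfolding set_integrable_def by (auto simp: sum_distrib_left intro!: integrable_sum)

lemma set_integral_sum':
  fixes f :: "'i \<Rightarrow> 'a \<Rightarrow> real"
  assumes h: "\<forall>i\<in>I. set_integrable M A (f i)"
  shows "(LINT x:A|M. (\<Sum>i\<in>I. f i x)) = (\<Sum>i\<in>I. LINT x:A|M. f i x)"
proof -
  have e: "(\<lambda>x. indicator A x *\<^sub>R (\<Sum>i\<in>I. f i x)) = (\<lambda>x. \<Sum>i\<in>I. indicator A x *\<^sub>R f i x)"
    by (simp add: sum_distrib_left)
  show ?thesis
    unfolding set_lebesgue_integral_def e
    using Bochner_Integration.integral_sum[where I=I and M=M and f="\<lambda>i x. indicator A x *\<^sub>R f i x"] h
    by (auto simp: set_integrable_def)
qed

lemma poly_prod_int: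
  assumes "\<forall>\<alpha>. set_integrable lborel \<Omega> (\<lambda>x. w x * monom_fun \<alpha> x)"
  shows "set_integrable lborel \<Omega> (\<lambda>x. (\<Sum>\<alpha>\<in>S. c \<alpha> * monom_fun \<alpha> x) * (\<Sum>\<beta>\<in>T. d \<beta> * monom_fun \<beta> x) * w x)"
proof -
  have eq: "(\<lambda>x. (\<Sum>\<alpha>\<in>S. c \<alpha> * monom_fun \<alpha> x) * (\<Sum>\<beta>\<in>T. d \<beta> * monom_fun \<beta> x) * w x)
    = (\<lambda>x. \<Sum>\<alpha>\<in>S. \<Sum>\<beta>\<in>T. (c \<alpha> * d \<beta>) * (w x * monom_fun (\<lambda>i. \<alpha> i + \<beta> i) x))"
  proof (rule ext)
    fix x
    have "(\<Sum>\<alpha>\<in>S. c \<alpha> * monom_fun \<alpha> x) * (\<Sum>\<beta>\<in>T. d \<beta> * monom_fun \<beta> x) * w x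
      = (\<Sum>\<alpha>\<in>S. \<Sum>\<beta>\<in>T. (c \<alpha> * monom_fun \<alpha> x) * (d \<beta> * monom_fun \<beta> x)) * w x"
      by (simp only: sum_product)
    also have "\<dots> = (\<Sum>\<alpha>\<in>S. \<Sum>\<beta>\<in>T. (c \<alpha> * monom_fun \<alpha> x) * (d \<beta> * monom_fun \<beta> x) * w x)"
      by (simp only: sum_distrib_right)
    also have "\<dots> = (\<Sum>\<alpha>\<in>S. \<Sum>\<beta>\<in>T. (c \<alpha> * d \<beta>) * (w x * monom_fun (\<lambda>i. \<alpha> i + \<beta> i) x))"
      by (intro sum.cong refl) (simp add: monom_add mult_ac)
    finally show "(\<Sum>\<alpha>\<in>S. c \<alpha> * monom_fun \<alpha> x) * (\<Sum>\<beta>\<in>T. d \<beta> * monom_fun \<beta> x) * w x = \<dots>" .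
  qed
  show ?thesis unfolding eq
    by (intro set_integrable_sum' ballI set_integrable_mult_right) (use assms in auto)
qed


lemma set_integral_add3:
  fixes f g h :: "'a \<Rightarrow> real"
  assumes "set_integrable M A f" "set_integrable M A g" "set_integrable M A h"
  shows "(LINT x:A|M. f x + g x + h x) = (LINT x:A|M. f x) + (LINT x:A|M. g x) + (LINT x:A|M. h x)"
proof -
  have fg: "set_integrable M A (\<lambda>x. f x + g x)" using set_integral_add(1)[OF assms(1,2)] .
  show ?thesis
    using set_integral_add(2)[OF fg assms(3)] set_integral_add(2)[OF assms(1,2)] by simp
qed

lemma mult_entry:
  fixes A B :: "'a::comm_ring_1 mat"
  assumes "A \<in> carrier_mat a b" "B \<in> carrier_mat b c" "i < a" "j < c"
  shows "(A * B) $$ (i,j) = (\<Sum>k<b. A $$ (i,k) * B $$ (k,j))"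
  using assms by (auto simp: scalar_prod_def lessThan_atLeast0 intro!: sum.cong)

theorem mainTheorem1:
  fixes \<Omega> :: "(real^'d::finite) set"
    and w :: "real^'d \<Rightarrow> real"
    and P :: "nat \<Rightarrow> nat \<Rightarrow> real^'d \<Rightarrow> real"
    and Pim :: "nat \<Rightarrow> real mat"
    and A B C :: "nat \<Rightarrow> 'd \<Rightarrow> real mat"
  defines "r \<equiv> rdim TYPE('d)"
  assumes domain: "open \<Omega>" "connected \<Omega>" "\<Omega> \<noteq> {}"
    and w_nonneg: "\<forall>x\<in>\<Omega>. w x \<ge> 0"
    and moments: "\<forall>\<alpha>::'d \<Rightarrow> nat. set_integrable lborel \<Omega> (\<lambda>x. w x * monom_fun \<alpha> x)"
    and P_deg: "\<forall>n. \<forall>k<r n. poly_deg_eq n (P n k)"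
    and P_span: "\<forall>n f. poly_deg_le n f \<longrightarrow>
                   (\<exists>g c. poly_deg_less n g \<and> f = (\<lambda>x. g x + (\<Sum>k<r n. c k * P n k x)))"
    and orth: "\<forall>i j. i \<noteq> j \<longrightarrow> gram P w \<Omega> i j = 0\<^sub>m (r i) (r j)"
    and Pi_carrier: "\<forall>j. Pim j \<in> carrier_mat (r j) (r j)"
    and Pi_inv: "\<forall>j. invertible_mat (Pim j)"
    and norm: "\<forall>j. gram P w \<Omega> j j * Pim j = 1\<^sub>m (r j)"
    and A_carrier: "\<forall>n i. A n i \<in> carrier_mat (r n) (r (Suc n))"
    and B_carrier: "\<forall>n i. B n i \<in> carrier_mat (r n) (r n)"
    and C_carrier: "\<forall>n i. n \<ge> 1 \<longrightarrow> C n i \<in> carrier_mat (r n) (r (n - 1))"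
    and recur0: "\<forall>i x. vec_nth x i \<cdot>\<^sub>v Pvec P 0 x
                   = A 0 i *\<^sub>v Pvec P 1 x + B 0 i *\<^sub>v Pvec P 0 x"
    and recur: "\<forall>n i x. n \<ge> 1 \<longrightarrow> vec_nth x i \<cdot>\<^sub>v Pvec P n x
                   = A n i *\<^sub>v Pvec P (Suc n) x + B n i *\<^sub>v Pvec P n x + C n i *\<^sub>v Pvec P (n - 1) x"
  shows "\<forall>n\<ge>1. \<forall>G :: nat \<Rightarrow> 'd \<Rightarrow> real mat.
           (\<forall>m\<in>{1..n}. (\<forall>i. G m i \<in> carrier_mat (r m) (r (m - 1)))
                       \<and> msum (r m) (r m) (\<lambda>i. G m i * (C m i)\<^sup>T) UNIV = 1\<^sub>m (r m))
           \<longrightarrow> Pim n = pi_formula TYPE('d) Pim A G n"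
proof -
  have Ppoly: "\<exists>c. P n k = (\<lambda>x. \<Sum>\<alpha>\<in>{\<alpha>. tdeg \<alpha> < Suc n}. c \<alpha> * monom_fun \<alpha> x)" if "k < r n" for n k
    using P_deg that unfolding poly_deg_eq_def poly_deg_le_def poly_deg_less_def by blast
  have PPint: "set_integrable lborel \<Omega> (\<lambda>x. P a k x * P b l x * w x)" if ka: "k < r a" and lb: "l < r b" for a k b l
  proof -
    obtain c where c: "P a k = (\<lambda>x. \<Sum>\<alpha>\<in>{\<alpha>. tdeg \<alpha> < Suc a}. c \<alpha> * monom_fun \<alpha> x)"
      using Ppoly[OF ka] by blast
    obtain d where d: "P b l = (\<lambda>x. \<Sum>\<alpha>\<in>{\<alpha>. tdeg \<alpha> < Suc b}. d \<alpha> * monom_fun \<alpha> x)"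
      using Ppoly[OF lb] by blast
    show ?thesis unfolding c d by (rule poly_prod_int[OF moments])
  qed
  have gidx: "gram P w \<Omega> a b $$ (k,l) = (LINT x:\<Omega>|lborel. P a k x * P b l x * w x)"
    if "k < r a" "l < r b" for a b k l
    using that by (simp add: gram_def r_def)
  have gz: "gram P w \<Omega> a b $$ (k,l) = 0" if "a \<noteq> b" "k < r a" "l < r b" for a b k l
    using orth that by simp
  have gC: "gram P w \<Omega> a b \<in> carrier_mat (r a) (r b)" for a b
    by (simp add: gram_def r_def)
  have gsym: "gram P w \<Omega> a b $$ (k,l) = gram P w \<Omega> b a $$ (l,k)"
    if "k < r a" "l < r b" for a b k l
    using that by (simp add: gidx mult_ac)
  have expL: "set_integrable lborel \<Omega> (\<lambda>x. (\<Sum>m<r p. c m * P p m x) * P q l x * w x) \<and>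
      (LINT x:\<Omega>|lborel. (\<Sum>m<r p. c m * P p m x) * P q l x * w x) = (\<Sum>m<r p. c m * gram P w \<Omega> p q $$ (m,l))"
    if "l < r q" for p q l c
  proof -
    have e: "(\<lambda>x. (\<Sum>m<r p. c m * P p m x) * P q l x * w x) = (\<lambda>x. \<Sum>m<r p. c m * (P p m x * P q l x * w x))"
      by (rule ext) (simp add: sum_distrib_right mult.assoc)
    have i: "\<forall>m\<in>{..<r p}. set_integrable lborel \<Omega> (\<lambda>x. c m * (P p m x * P q l x * w x))"
      using PPint that by auto
    have "(LINT x:\<Omega>|lborel. \<Sum>m<r p. c m * (P p m x * P q l x * w x)) = (\<Sum>m<r p. LINT x:\<Omega>|lborel. c m * (P p m x * P q l x * w x))"
      by (rule set_integral_sum'[OF i])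
    also have "\<dots> = (\<Sum>m<r p. c m * gram P w \<Omega> p q $$ (m,l))"
      by (intro sum.cong refl) (use that in \<open>simp add: gidx\<close>)
    finally show ?thesis unfolding e using set_integrable_sum'[OF i] by simp
  qed
  have expR: "set_integrable lborel \<Omega> (\<lambda>x. P q l x * (\<Sum>m<r p. c m * P p m x) * w x) \<and>
      (LINT x:\<Omega>|lborel. P q l x * (\<Sum>m<r p. c m * P p m x) * w x) = (\<Sum>m<r p. c m * gram P w \<Omega> p q $$ (m,l))"
    if "l < r q" for p q l c
  proof -
    have e: "(\<lambda>x. P q l x * (\<Sum>m<r p. c m * P p m x) * w x) = (\<lambda>x. (\<Sum>m<r p. c m * P p m x) * P q l x * w x)"
      by (rule ext) (simp add: mult_ac)
    show ?thesis unfolding e by (rule expL[OF that])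
  qed
  have mv: "(M *\<^sub>v Pvec P p x) $ k = (\<Sum>m<r p. M $$ (k,m) * P p m x)"
    if "M \<in> carrier_mat a (r p)" "k < a" for M a p x k
    using that by (auto simp: Pvec_def r_def scalar_prod_def lessThan_atLeast0 intro!: sum.cong)
  have comp: "x $ i * P n k x = (\<Sum>m<r (Suc n). A n i $$ (k,m) * P (Suc n) m x)
      + (\<Sum>m<r n. B n i $$ (k,m) * P n m x)
      + (\<Sum>m<r (n-1). (if n = 0 then 0 else C n i $$ (k,m)) * P (n-1) m x)"
    if k: "k < r n" for n i x k
  proof -
    have Ac': "A n i \<in> carrier_mat (r n) (r (Suc n))" using A_carrier by auto
    have Bc': "B n i \<in> carrier_mat (r n) (r n)" using B_carrier by auto
    have l: "(x$i \<cdot>\<^sub>v Pvec P n x) $ k = x$i * P n k x" using k by (simp add: Pvec_def r_def)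
    have a: "(A n i *\<^sub>v Pvec P (Suc n) x) $ k = (\<Sum>m<r (Suc n). A n i $$ (k,m) * P (Suc n) m x)"
      by (rule mv[OF Ac' k])
    have b: "(B n i *\<^sub>v Pvec P n x) $ k = (\<Sum>m<r n. B n i $$ (k,m) * P n m x)"
      by (rule mv[OF Bc' k])
    have dB: "dim_vec (B n i *\<^sub>v Pvec P n x) = r n" using Bc' by simp
    show ?thesis
    proof (cases "n = 0")
      case True
      have "(x$i \<cdot>\<^sub>v Pvec P n x) = A n i *\<^sub>v Pvec P (Suc n) x + B n i *\<^sub>v Pvec P n x"
        using recur0 True by simp
      hence "(x$i \<cdot>\<^sub>v Pvec P n x) $ k = (A n i *\<^sub>v Pvec P (Suc n) x) $ k + (B n i *\<^sub>v Pvec P n x) $ k"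
        using dB k by simp
      thus ?thesis using l a b True by simp
    next
      case False
      have Cc': "C n i \<in> carrier_mat (r n) (r (n-1))" using C_carrier[rule_format, of n i] False by simp
      have c: "(C n i *\<^sub>v Pvec P (n-1) x) $ k = (\<Sum>m<r (n-1). C n i $$ (k,m) * P (n-1) m x)"
        by (rule mv[OF Cc' k])
      have dC: "dim_vec (C n i *\<^sub>v Pvec P (n-1) x) = r n" using Cc' by simp
      have "(x$i \<cdot>\<^sub>v Pvec P n x) = A n i *\<^sub>v Pvec P (Suc n) x + B n i *\<^sub>v Pvec P n x + C n i *\<^sub>v Pvec P (n-1) x"
        using recur False by simp
      hence "(x$i \<cdot>\<^sub>v Pvec P n x) $ k = (A n i *\<^sub>v Pvec P (Suc n) x) $ k + (B n i *\<^sub>v Pvec P n x) $ k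
          + (C n i *\<^sub>v Pvec P (n-1) x) $ k"
        using dB dC k by simp
      thus ?thesis using l a b c False by simp
    qed
  qed
  have rel: "A n i * gram P w \<Omega> (Suc n) (Suc n) = gram P w \<Omega> n n * (C (Suc n) i)\<^sup>T" for n i
  proof -
    have Ac': "A n i \<in> carrier_mat (r n) (r (Suc n))" using A_carrier by auto
    have Cc': "C (Suc n) i \<in> carrier_mat (r (Suc n)) (r n)" using C_carrier[rule_format, of "Suc n" i] by simp
    hence CTc: "(C (Suc n) i)\<^sup>T \<in> carrier_mat (r n) (r (Suc n))" by simp
    show ?thesis
    proof (rule eq_matI)
      fix k l assume "k < dim_row (gram P w \<Omega> n n * (C (Suc n) i)\<^sup>T)" "l < dim_col (gram P w \<Omega> n n * (C (Suc n) i)\<^sup>T)"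
      hence k: "k < r n" and l: "l < r (Suc n)" using gC[of n n] Cc' by auto
      define S1 where "S1 x = (\<Sum>m<r (Suc n). A n i $$ (k,m) * P (Suc n) m x)" for x
      define S2 where "S2 x = (\<Sum>m<r n. B n i $$ (k,m) * P n m x)" for x
      define S3 where "S3 x = (\<Sum>m<r (n-1). (if n = 0 then 0 else C n i $$ (k,m)) * P (n-1) m x)" for x
      define T1 where "T1 x = (\<Sum>m<r (Suc (Suc n)). A (Suc n) i $$ (l,m) * P (Suc (Suc n)) m x)" for x
      define T2 where "T2 x = (\<Sum>m<r (Suc n). B (Suc n) i $$ (l,m) * P (Suc n) m x)" for x
      define T3 where "T3 x = (\<Sum>m<r n. C (Suc n) i $$ (l,m) * P n m x)" for x
      have cS: "x $ i * P n k x = S1 x + S2 x + S3 x" for x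
        unfolding S1_def S2_def S3_def by (rule comp[OF k])
      have cT: "x $ i * P (Suc n) l x = T1 x + T2 x + T3 x" for x
        using comp[OF l, of x i] unfolding T1_def T2_def T3_def by simp
      have V: "(LINT x:\<Omega>|lborel. (x $ i * P n k x) * P (Suc n) l x * w x)
          = (\<Sum>m<r (Suc n). A n i $$ (k,m) * gram P w \<Omega> (Suc n) (Suc n) $$ (m,l))"
      proof -
        have e: "(\<lambda>x. (x $ i * P n k x) * P (Suc n) l x * w x)
           = (\<lambda>x. S1 x * P (Suc n) l x * w x + S2 x * P (Suc n) l x * w x + S3 x * P (Suc n) l x * w x)"
          by (rule ext) (simp add: cS distrib_right)
        have z2: "(\<Sum>m<r n. B n i $$ (k,m) * gram P w \<Omega> n (Suc n) $$ (m,l)) = 0"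
          by (rule sum.neutral) (use l in \<open>auto simp: gz\<close>)
        have z3: "(\<Sum>m<r (n-1). (if n = 0 then 0 else C n i $$ (k,m)) * gram P w \<Omega> (n-1) (Suc n) $$ (m,l)) = 0"
          by (rule sum.neutral) (use l in \<open>auto simp: gz\<close>)
        show ?thesis unfolding e
          apply (subst set_integral_add3)
          using expL[OF l] z2 z3 unfolding S1_def S2_def S3_def by auto
      qed
      have V': "(LINT x:\<Omega>|lborel. P n k x * (x $ i * P (Suc n) l x) * w x)
          = (\<Sum>m<r n. C (Suc n) i $$ (l,m) * gram P w \<Omega> n n $$ (m,k))"
      proof -
        have e: "(\<lambda>x. P n k x * (x $ i * P (Suc n) l x) * w x)
           = (\<lambda>x. P n k x * T1 x * w x + P n k x * T2 x * w x + P n k x * T3 x * w x)"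
          by (rule ext) (simp add: cT distrib_right distrib_left)
        have z1: "(\<Sum>m<r (Suc (Suc n)). A (Suc n) i $$ (l,m) * gram P w \<Omega> (Suc (Suc n)) n $$ (m,k)) = 0"
          by (rule sum.neutral) (use k in \<open>auto simp: gz\<close>)
        have z2: "(\<Sum>m<r (Suc n). B (Suc n) i $$ (l,m) * gram P w \<Omega> (Suc n) n $$ (m,k)) = 0"
          by (rule sum.neutral) (use k in \<open>auto simp: gz\<close>)
        show ?thesis unfolding e
          apply (subst set_integral_add3)
          using expR[OF k] z1 z2 unfolding T1_def T2_def T3_def by auto
      qed
      have VV: "(LINT x:\<Omega>|lborel. (x $ i * P n k x) * P (Suc n) l x * w x)
          = (LINT x:\<Omega>|lborel. P n k x * (x $ i * P (Suc n) l x) * w x)"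
        by (simp add: mult_ac)
      have "(A n i * gram P w \<Omega> (Suc n) (Suc n)) $$ (k,l) = (\<Sum>m<r (Suc n). A n i $$ (k,m) * gram P w \<Omega> (Suc n) (Suc n) $$ (m,l))"
        by (rule mult_entry[OF Ac' gC k l])
      also have "\<dots> = (\<Sum>m<r n. C (Suc n) i $$ (l,m) * gram P w \<Omega> n n $$ (m,k))"
        using V V' VV by simp
      also have "\<dots> = (\<Sum>m<r n. gram P w \<Omega> n n $$ (k,m) * (C (Suc n) i)\<^sup>T $$ (m,l))"
        by (intro sum.cong refl) (use k l Cc' in \<open>auto simp: gsym[of _ n k n] mult.commute\<close>)
      also have "\<dots> = (gram P w \<Omega> n n * (C (Suc n) i)\<^sup>T) $$ (k,l)"
        by (rule mult_entry[OF gC CTc k l, symmetric])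
      finally show "(A n i * gram P w \<Omega> (Suc n) (Suc n)) $$ (k,l) = (gram P w \<Omega> n n * (C (Suc n) i)\<^sup>T) $$ (k,l)" .
    qed (use gC[of n n] gC[of "Suc n" "Suc n"] Cc' Ac' in auto)
  qed
  have PG: "Pim j * gram P w \<Omega> j j = 1\<^sub>m (r j)" for j
    by (rule mat_mult_left_right_inverse[OF gC]) (use Pi_carrier norm in auto)
  have Prel: "Pim n * A n i = (C (Suc n) i)\<^sup>T * Pim (Suc n)" for n i
  proof -
    have Ac': "A n i \<in> carrier_mat (r n) (r (Suc n))" using A_carrier by auto
    have Cc': "C (Suc n) i \<in> carrier_mat (r (Suc n)) (r n)" using C_carrier[rule_format, of "Suc n" i] by simp
    hence CTc: "(C (Suc n) i)\<^sup>T \<in> carrier_mat (r n) (r (Suc n))" by simp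
    have P0: "Pim n \<in> carrier_mat (r n) (r n)" and P1: "Pim (Suc n) \<in> carrier_mat (r (Suc n)) (r (Suc n))"
      using Pi_carrier by auto
    have G0: "gram P w \<Omega> n n \<in> carrier_mat (r n) (r n)" and G1: "gram P w \<Omega> (Suc n) (Suc n) \<in> carrier_mat (r (Suc n)) (r (Suc n))"
      using gC by auto
    have PA: "Pim n * A n i \<in> carrier_mat (r n) (r (Suc n))" using P0 Ac' by simp
    have "Pim n * A n i = (Pim n * A n i) * 1\<^sub>m (r (Suc n))" using right_mult_one_mat[OF PA] by simp
    also have "\<dots> = (Pim n * A n i) * (gram P w \<Omega> (Suc n) (Suc n) * Pim (Suc n))" using norm by simp
    also have "\<dots> = ((Pim n * A n i) * gram P w \<Omega> (Suc n) (Suc n)) * Pim (Suc n)"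
      by (rule assoc_mult_mat[OF PA G1 P1, symmetric])
    also have "(Pim n * A n i) * gram P w \<Omega> (Suc n) (Suc n) = Pim n * (A n i * gram P w \<Omega> (Suc n) (Suc n))"
      by (rule assoc_mult_mat[OF P0 Ac' G1])
    also have "\<dots> = Pim n * (gram P w \<Omega> n n * (C (Suc n) i)\<^sup>T)" by (simp add: rel)
    also have "\<dots> = (Pim n * gram P w \<Omega> n n) * (C (Suc n) i)\<^sup>T"
      by (rule assoc_mult_mat[OF P0 G0 CTc, symmetric])
    also have "\<dots> = (C (Suc n) i)\<^sup>T" using PG left_mult_one_mat[OF CTc] by simp
    finally show ?thesis .
  qed
  show ?thesis
  proof (intro allI impI)
    fix n :: nat and G :: "nat \<Rightarrow> 'd \<Rightarrow> real mat"
    assume "n \<ge> 1"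
    assume hG: "\<forall>m\<in>{1..n}. (\<forall>i. G m i \<in> carrier_mat (r m) (r (m - 1)))
                       \<and> msum (r m) (r m) (\<lambda>i. G m i * (C m i)\<^sup>T) UNIV = 1\<^sub>m (r m)"
    have Gc: "\<forall>m\<in>{1..n}. \<forall>i. G m i \<in> carrier_mat (r m) (r (m - 1))" using hG by blast
    have rec: "\<forall>m\<in>{1..n}. Pim m = msum (r m) (r m) (\<lambda>i. G m i * Pim (m-1) * A (m-1) i) UNIV"
    proof
      fix m assume m: "m \<in> {1..n}"
      then obtain m' where mm: "m = Suc m'" by (cases m) auto
      have Gm: "G m i \<in> carrier_mat (r m) (r m')" for i using Gc m mm by (metis diff_Suc_1)
      have Cm: "(C m i)\<^sup>T \<in> carrier_mat (r m') (r m)" for i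
        using C_carrier[rule_format, of m i] mm by simp
      have Pm: "Pim m \<in> carrier_mat (r m) (r m)" using Pi_carrier by auto
      have Pm': "Pim m' \<in> carrier_mat (r m') (r m')" using Pi_carrier by auto
      have Am: "A m' i \<in> carrier_mat (r m') (r m)" for i using A_carrier mm by auto
      have "Pim m = 1\<^sub>m (r m) * Pim m" using left_mult_one_mat[OF Pm] by simp
      also have "\<dots> = msum (r m) (r m) (\<lambda>i. G m i * (C m i)\<^sup>T) UNIV * Pim m" using hG m by simp
      also have "\<dots> = msum (r m) (r m) (\<lambda>i. G m i * (C m i)\<^sup>T * Pim m) UNIV"
        by (rule msum_mult_right) (use mult_carrier_mat[OF Gm Cm] Pm in auto)
      also have "\<dots> = msum (r m) (r m) (\<lambda>i. G m i * Pim (m-1) * A (m-1) i) UNIV"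
      proof (rule msum_cong)
        fix i
        have "G m i * (C m i)\<^sup>T * Pim m = G m i * ((C m i)\<^sup>T * Pim m)"
          by (rule assoc_mult_mat[OF Gm Cm Pm])
        also have "(C m i)\<^sup>T * Pim m = Pim m' * A m' i" using Prel[of m' i] mm by simp
        also have "G m i * (Pim m' * A m' i) = G m i * Pim m' * A m' i"
          by (rule assoc_mult_mat[OF Gm Pm' Am, symmetric])
        finally show "G m i * (C m i)\<^sup>T * Pim m = G m i * Pim (m-1) * A (m-1) i" using mm by simp
      qed
      finally show "Pim m = msum (r m) (r m) (\<lambda>i. G m i * Pim (m-1) * A (m-1) i) UNIV" .
    qed
    show "Pim n = pi_formula TYPE('d) Pim A G n"
      by (rule pi_formula_from_rec[OF Pi_carrier[unfolded r_def] A_carrier[unfolded r_def] Gc[unfolded r_def] rec[unfolded r_def]])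
  qed
qed

end
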